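(* Let $\mathcal{X}$ be a nonempty open convex subset of $\mathbb{R}^n$ and let $\textbf{F}:\mathcal{X}\to I(\mathbb{R})$ be $gH$-differentiable on $\mathcal{X}$. If $\textbf{F}$ is convex on $\mathcal{X}$, then \[\textbf{0}\preceq(x-y)^T\odot\nabla\textbf{F}(x)\ominus_{gH}(x-y)^T\odot\nabla\textbf{F}(y)\quad\text{for all }x,y\in\mathcal{X}.\]
   Context: $I(\mathbb{R})$: closed bounded intervals $\textbf{A}=[\underline{a},\overline{a}]$ with Moore arithmetic ($\oplus$ endpointwise; $\lambda\odot\textbf{A}=[\lambda\underline{a},\lambda\overline{a}]$ if $\lambda\ge0$, $[\lambda\overline{a},\lambda\underline{a}]$ if $\lambda<0$); $gH$-difference $\textbf{A}\ominus_{gH}\textbf{B}=[\min\{\underline{a}-\underline{b},\overline{a}-\overline{b}\},\max\{\underline{a}-\underline{b},\overline{a}-\overline{b}\}]$; limits in the norm $\max\{|\underline{a}|,|\overline{a}|\}$; $\textbf{0}=[0,0]$. $\textbf{A}\preceq\textbf{B}$ iff $\underline{a}\le\underline{b}$ and $\overline{a}\le\overline{b}$. An IVF is $\textbf{F}(x)=[\underline{f}(x),\overline{f}(x)]$. $D_i\textbf{F}(x)=\lim_{h\to0}\frac1h\odot(\textbf{F}(x+he_i)\ominus_{gH}\textbf{F}(x))$, $\nabla\textbf{F}(x)=(D_1\textbf{F}(x),\dots,D_n\textbf{F}(x))^T$, $d^T\odot\nabla\textbf{F}(x)=\bigoplus_i d_i\odot D_i\textbf{F}(x)$. Linear IVF: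 $\textbf{L}(x)=\bigoplus_i x_i\odot\textbf{L}(e_i)$. $\textbf{F}$ is $gH$-differentiable at $\bar{x}$ if there exist a linear IVF $\textbf{L}_{\bar{x}}$, an IVF $\textbf{E}(\textbf{F}(\bar{x});d)$ and $\delta>0$ with $(\textbf{F}(\bar{x}+d)\ominus_{gH}\textbf{F}(\bar{x}))\ominus_{gH}\textbf{L}_{\bar{x}}(d)=\lVert d\rVert\odot\textbf{E}(\textbf{F}(\bar{x});d)$ for $\lVert d\rVert<\delta$ and $\textbf{E}\to\textbf{0}$ as $\lVert d\rVert\to0$; on $\mathcal{X}$ means at every point. $\textbf{F}$ is convex if $\textbf{F}(\lambda x_1+(1-\lambda)x_2)\preceq\lambda\odot\textbf{F}(x_1)\oplus(1-\lambda)\odot\textbf{F}(x_2)$ for all $x_1,x_2\in\mathcal{X}$, $\lambda\in[0,1]$. *)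

theory Defs
  imports "HOL-Analysis.Analysis"
begin

text \<open>Closed bounded intervals [lo, hi] are represented as pairs (lo, hi) with lo \<le> hi.
  Moore addition is the componentwise addition of pairs.\<close>

type_synonym ivl = "real \<times> real"

definition is_ivl :: "ivl \<Rightarrow> bool" where
  "is_ivl A \<longleftrightarrow> fst A \<le> snd A"

definition iadd :: "ivl \<Rightarrow> ivl \<Rightarrow> ivl" where
  "iadd A B = (fst A + fst B, snd A + snd B)"

definition iscale :: "real \<Rightarrow> ivl \<Rightarrow> ivl" where
  "iscale l A = (if l \<ge> 0 then (l * fst A, l * snd A) else (l * snd A, l * fst A))"

definition gH_diff :: "ivl \<Rightarrow> ivl \<Rightarrow> ivl" where
  "gH_diff A B = (min (fst A - fst B) (snd A - snd B), max (fst A - fst B) (snd A - snd B))"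

definition inorm :: "ivl \<Rightarrow> real" where
  "inorm A = max \<bar>fst A\<bar> \<bar>snd A\<bar>"

definition ile :: "ivl \<Rightarrow> ivl \<Rightarrow> bool" where
  "ile A B \<longleftrightarrow> fst A \<le> fst B \<and> snd A \<le> snd B"

definition izero :: ivl where
  "izero = (0, 0)"

definition isum :: "('i \<Rightarrow> ivl) \<Rightarrow> 'i set \<Rightarrow> ivl" where
  "isum f I = (\<Sum>i\<in>I. fst (f i), \<Sum>i\<in>I. snd (f i))"

definition ilim :: "('a \<Rightarrow> ivl) \<Rightarrow> ivl \<Rightarrow> 'a filter \<Rightarrow> bool" where
  "ilim g D F \<longleftrightarrow> ((\<lambda>h. inorm (gH_diff (g h) D)) \<longlongrightarrow> 0) F"

definition has_gH_partial :: "(real^'n \<Rightarrow> ivl) \<Rightarrow> real^'n \<Rightarrow> 'n \<Rightarrow> ivl \<Rightarrow> bool" where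
  "has_gH_partial F x i D \<longleftrightarrow>
     ilim (\<lambda>h. iscale (1 / h) (gH_diff (F (x + h *\<^sub>R axis i 1)) (F x))) D (at 0)"

definition gH_partial :: "(real^'n \<Rightarrow> ivl) \<Rightarrow> 'n \<Rightarrow> real^'n \<Rightarrow> ivl" where
  "gH_partial F i x = (THE D. has_gH_partial F x i D)"

text \<open>d^T \<odot> \<nabla>F(x) = \<Oplus>_i d_i \<odot> D_i F(x).\<close>
definition dir_grad :: "(real^'n \<Rightarrow> ivl) \<Rightarrow> real^'n \<Rightarrow> real^'n \<Rightarrow> ivl" where
  "dir_grad F d x = isum (\<lambda>i. iscale (d $ i) (gH_partial F i x)) UNIV"

text \<open>Linear IVF determined by its values c i = L(e_i): L(x) = \<Oplus>_i x_i \<odot> L(e_i).\<close>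
definition lin_ivf :: "('n \<Rightarrow> ivl) \<Rightarrow> real^'n \<Rightarrow> ivl" where
  "lin_ivf c d = isum (\<lambda>i. iscale (d $ i) (c i)) UNIV"

definition gH_differentiable_at :: "(real^'n \<Rightarrow> ivl) \<Rightarrow> (real^'n) set \<Rightarrow> real^'n \<Rightarrow> bool" where
  "gH_differentiable_at F X xb \<longleftrightarrow>
     (\<exists>c E \<delta>. (\<forall>i. is_ivl (c i)) \<and> (\<forall>d. is_ivl (E d)) \<and> \<delta> > 0 \<and>
        (\<forall>d. norm d < \<delta> \<and> xb + d \<in> X \<longrightarrow>
           gH_diff (gH_diff (F (xb + d)) (F xb)) (lin_ivf c d) = iscale (norm d) (E d)) \<and>
        ilim E izero (at 0))"

definition gH_differentiable_on :: "(real^'n \<Rightarrow> ivl) \<Rightarrow> (real^'n) set \<Rightarrow> bool" where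
  "gH_differentiable_on F X \<longleftrightarrow> (\<forall>x\<in>X. gH_differentiable_at F X x)"

definition ivf_convex_on :: "(real^'n) set \<Rightarrow> (real^'n \<Rightarrow> ivl) \<Rightarrow> bool" where
  "ivf_convex_on X F \<longleftrightarrow>
     (\<forall>x1\<in>X. \<forall>x2\<in>X. \<forall>l::real. 0 \<le> l \<and> l \<le> 1 \<longrightarrow>
        ile (F (l *\<^sub>R x1 + (1 - l) *\<^sub>R x2)) (iadd (iscale l (F x1)) (iscale (1 - l) (F x2))))"

end

theory Submission
  imports Defs
begin

lemma iscale_mult: "iscale (s*t) A = iscale s (iscale t A)"
  by (cases "s \<ge> 0"; cases "t \<ge> 0") (auto simp: iscale_def zero_le_mult_iff mult.assoc)

lemma iscale_one[simp]: "iscale 1 A = A"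
  by (simp add: iscale_def)

lemma iscale_isum: "iscale s (isum f I) = isum (\<lambda>i. iscale s (f i)) I"
  by (cases "s \<ge> 0") (auto simp: iscale_def isum_def sum_distrib_left)

lemma lin_scale: "lin_ivf c (t *\<^sub>R v) = iscale t (lin_ivf c v)"
  unfolding lin_ivf_def iscale_isum by (simp add: iscale_mult)

lemma iscale_gH: "iscale s (gH_diff A B) = gH_diff (iscale s A) (iscale s B)"
  by (cases "s \<ge> 0") (auto simp: iscale_def gH_diff_def min_mult_distrib_left max_mult_distrib_left
      right_diff_distrib min.commute max.commute)

lemma inorm_scale: "inorm (iscale s A) = \<bar>s\<bar> * inorm A"
  by (cases "s \<ge> 0") (auto simp: inorm_def iscale_def abs_mult max_mult_distrib_left max.commute)

lemma inorm_gH: "inorm (gH_diff A B) = max \<bar>fst A - fst B\<bar> \<bar>snd A - snd B\<bar>"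
  by (auto simp: inorm_def gH_diff_def min_def max_def)

lemma inorm_gH_zero: "inorm (gH_diff A izero) = inorm A"
  by (auto simp: inorm_def gH_diff_def izero_def min_def max_def)

lemma ilim_fst:
  assumes "ilim g D F" shows "((\<lambda>h. fst (g h)) \<longlongrightarrow> fst D) F"
proof -
  have "((\<lambda>h. fst (g h) - fst D) \<longlongrightarrow> 0) F"
    apply (rule Lim_null_comparison[of _ "\<lambda>h. inorm (gH_diff (g h) D)"])
    using assms by (auto simp: ilim_def inorm_gH)
  then show ?thesis by (rule LIM_zero_cancel)
qed

lemma ilim_snd:
  assumes "ilim g D F" shows "((\<lambda>h. snd (g h)) \<longlongrightarrow> snd D) F"
proof -
  have "((\<lambda>h. snd (g h) - snd D) \<longlongrightarrow> 0) F"
    apply (rule Lim_null_comparison[of _ "\<lambda>h. inorm (gH_diff (g h) D)"])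
    using assms by (auto simp: ilim_def inorm_gH)
  then show ?thesis by (rule LIM_zero_cancel)
qed

lemma ilim_unique:
  fixes g :: "real \<Rightarrow> ivl"
  assumes "ilim g D1 (at 0)" "ilim g D2 (at 0)" shows "D1 = D2"
proof (rule prod_eqI)
  show "fst D1 = fst D2"
    using tendsto_unique[OF _ ilim_fst[OF assms(1)] ilim_fst[OF assms(2)]] by simp
  show "snd D1 = snd D2"
    using tendsto_unique[OF _ ilim_snd[OF assms(1)] ilim_snd[OF assms(2)]] by simp
qed

lemma dir_lim:
  assumes "open X" "x \<in> X" "\<delta> > 0"
    and eq: "\<forall>d. norm d < \<delta> \<and> x + d \<in> X \<longrightarrow>
           gH_diff (gH_diff (F (x + d)) (F x)) (lin_ivf c d) = iscale (norm d) (E d)"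
    and EL: "ilim E izero (at 0)"
  shows "ilim (\<lambda>t. iscale (1/t) (gH_diff (F (x + t *\<^sub>R v)) (F x))) (lin_ivf c v) (at 0)"
proof -
  obtain e where e: "e>0" "ball x e \<subseteq> X" using open_contains_ball assms by blast
  have ev: "eventually (\<lambda>t. norm v * inorm (E (t *\<^sub>R v)) =
      inorm (gH_diff (iscale (1/t) (gH_diff (F (x + t *\<^sub>R v)) (F x))) (lin_ivf c v))) (at 0)"
    unfolding eventually_at
  proof (intro exI[of _ "min \<delta> e / (norm v + 1)"] conjI ballI impI)
    show "0 < min \<delta> e / (norm v + 1)" using e assms by (smt (verit) divide_pos_pos norm_ge_zero)
    fix t :: real assume t: "t \<noteq> 0 \<and> dist t 0 < min \<delta> e / (norm v + 1)"
    have "\<bar>t\<bar> * (norm v + 1) < min \<delta> e"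
    proof -
      have "0 < norm v + 1" by (smt (verit) norm_ge_zero)
      then show ?thesis using t pos_less_divide_eq[of "norm v + 1" "\<bar>t\<bar>" "min \<delta> e"] by simp
    qed
    moreover have "\<bar>t\<bar> * norm v \<le> \<bar>t\<bar> * (norm v + 1)" by (simp add: mult_left_mono)
    ultimately have lt: "norm (t *\<^sub>R v) < min \<delta> e" by simp
    have "x + t *\<^sub>R v \<in> X" using e lt by (auto simp: dist_norm)
    then have E: "gH_diff (gH_diff (F (x + t *\<^sub>R v)) (F x)) (lin_ivf c (t *\<^sub>R v))
        = iscale (norm (t *\<^sub>R v)) (E (t *\<^sub>R v))" using eq lt by auto
    have L: "lin_ivf c v = iscale (1/t) (lin_ivf c (t *\<^sub>R v))"
      using t by (simp add: lin_scale iscale_mult[symmetric])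
    show "norm v * inorm (E (t *\<^sub>R v)) =
      inorm (gH_diff (iscale (1/t) (gH_diff (F (x + t *\<^sub>R v)) (F x))) (lin_ivf c v))"
      apply (subst L)
      unfolding iscale_gH[symmetric] E inorm_scale
      using t by (simp add: abs_mult)
  qed
  have "((\<lambda>t. norm v * inorm (E (t *\<^sub>R v))) \<longlongrightarrow> 0) (at 0)"
  proof (cases "v = 0")
    case True then show ?thesis by simp
  next
    case False
    have lim: "((\<lambda>d. inorm (E d)) \<longlongrightarrow> 0) (at 0)"
      using EL by (simp add: ilim_def inorm_gH_zero)
    have "filterlim (\<lambda>t. t *\<^sub>R v) (at 0) (at (0::real))"
      unfolding filterlim_at
    proof
      show "\<forall>\<^sub>F t in at (0::real). t *\<^sub>R v \<in> UNIV \<and> t *\<^sub>R v \<noteq> 0"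
        using False by (auto simp: eventually_at_filter)
      show "((\<lambda>t. t *\<^sub>R v) \<longlongrightarrow> 0) (at (0::real))"
        by (intro tendsto_eq_intros) auto
    qed
    from filterlim_compose[OF lim this] show ?thesis
      by (intro tendsto_mult_right_zero) simp
  qed
  then show ?thesis unfolding ilim_def using ev by (rule Lim_transform_eventually)
qed


lemma lin_axis: "lin_ivf c (axis i 1) = c i"
proof -
  have f: "\<And>j. fst (iscale (axis i 1 $ j) (c j)) = (if j = i then fst (c i) else 0)"
    and s: "\<And>j. snd (iscale (axis i 1 $ j) (c j)) = (if j = i then snd (c i) else 0)"
    by (auto simp: axis_def iscale_def)
  show ?thesis unfolding lin_ivf_def isum_def f s by simp
qed

lemma diff_grad:
  assumes "open X" "x \<in> X" "\<delta> > 0"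
    and eq: "\<forall>d. norm d < \<delta> \<and> x + d \<in> X \<longrightarrow>
           gH_diff (gH_diff (F (x + d)) (F x)) (lin_ivf c d) = iscale (norm d) (E d)"
    and EL: "ilim E izero (at 0)"
  shows "dir_grad F d x = lin_ivf c d"
proof -
  have "gH_partial F i x = c i" for i
  proof -
    have h: "has_gH_partial F x i (c i)"
      unfolding has_gH_partial_def
      using dir_lim[OF assms, of "axis i 1"] by (simp add: lin_axis)
    show ?thesis unfolding gH_partial_def
      by (rule the_equality) (use h ilim_unique in \<open>auto simp: has_gH_partial_def\<close>)
  qed
  then show ?thesis by (simp add: dir_grad_def lin_ivf_def)
qed

theorem theorem3p4:
  fixes X :: "(real^'n) set" and F :: "real^'n \<Rightarrow> ivl"
  assumes "X \<noteq> {}" and "open X" and "convex X"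
    and "\<forall>x\<in>X. is_ivl (F x)"
    and "gH_differentiable_on F X"
    and "ivf_convex_on X F"
  shows "\<forall>x\<in>X. \<forall>y\<in>X. ile izero (gH_diff (dir_grad F (x - y) x) (dir_grad F (x - y) y))"
proof (intro ballI)
  fix x y assume x: "x \<in> X" and y: "y \<in> X"
  define d where "d = x - y"
  obtain cx Ex \<delta>x where hx: "\<delta>x > 0" "\<forall>d. norm d < \<delta>x \<and> x + d \<in> X \<longrightarrow>
           gH_diff (gH_diff (F (x + d)) (F x)) (lin_ivf cx d) = iscale (norm d) (Ex d)"
    "ilim Ex izero (at 0)"
    using assms(5) x unfolding gH_differentiable_on_def gH_differentiable_at_def by blast
  obtain cy Ey \<delta>y where hy: "\<delta>y > 0" "\<forall>d. norm d < \<delta>y \<and> y + d \<in> X \<longrightarrow>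
           gH_diff (gH_diff (F (y + d)) (F y)) (lin_ivf cy d) = iscale (norm d) (Ey d)"
    "ilim Ey izero (at 0)"
    using assms(5) y unfolding gH_differentiable_on_def gH_differentiable_at_def by blast
  define Lx where "Lx = lin_ivf cx d"
  define Ly where "Ly = lin_ivf cy d"
  have gx: "dir_grad F d x = Lx" unfolding Lx_def using diff_grad[OF assms(2) x hx] .
  have gy: "dir_grad F d y = Ly" unfolding Ly_def using diff_grad[OF assms(2) y hy] .
  define Qx where "Qx = (\<lambda>t. iscale (1/t) (gH_diff (F (x + t *\<^sub>R (-d))) (F x)))"
  define Qy where "Qy = (\<lambda>t. iscale (1/t) (gH_diff (F (y + t *\<^sub>R d)) (F y)))"
  have mx: "lin_ivf cx (-d) = (- snd Lx, - fst Lx)"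
    using lin_scale[of cx "-1" d] unfolding Lx_def by (simp add: iscale_def)
  have ilx: "ilim Qx (lin_ivf cx (-d)) (at_right 0)"
    using dir_lim[OF assms(2) x hx, of "-d"] unfolding Qx_def ilim_def
    by (rule tendsto_mono[rotated]) (simp add: at_le)
  have ily: "ilim Qy Ly (at_right 0)"
    using dir_lim[OF assms(2) y hy, of "d"] unfolding Qy_def ilim_def Ly_def
    by (rule tendsto_mono[rotated]) (simp add: at_le)
  have fx: "((\<lambda>t. - snd (Qx t)) \<longlongrightarrow> fst Lx) (at_right 0)"
    using tendsto_minus[OF ilim_snd[OF ilx]] mx by simp
  have sx: "((\<lambda>t. - fst (Qx t)) \<longlongrightarrow> snd Lx) (at_right 0)"
    using tendsto_minus[OF ilim_fst[OF ilx]] mx by simp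
  have fy: "((\<lambda>t. fst (Qy t)) \<longlongrightarrow> fst Ly) (at_right 0)" using ilim_fst[OF ily] .
  have sy: "((\<lambda>t. snd (Qy t)) \<longlongrightarrow> snd Ly) (at_right 0)" using ilim_snd[OF ily] .
  have ineq: "fst (Qy t) \<le> - snd (Qx t) \<and> snd (Qy t) \<le> - fst (Qx t)" if t: "0 < t" "t < 1" for t
  proof -
    have p1: "y + t *\<^sub>R d = t *\<^sub>R x + (1 - t) *\<^sub>R y" unfolding d_def by (simp add: algebra_simps)
    have p2: "x + t *\<^sub>R (-d) = t *\<^sub>R y + (1 - t) *\<^sub>R x" unfolding d_def by (simp add: algebra_simps)
    have c1: "ile (F (t *\<^sub>R x + (1 - t) *\<^sub>R y)) (iadd (iscale t (F x)) (iscale (1 - t) (F y)))"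
      using assms(6) x y t unfolding ivf_convex_on_def by auto
    have c2: "ile (F (t *\<^sub>R y + (1 - t) *\<^sub>R x)) (iadd (iscale t (F y)) (iscale (1 - t) (F x)))"
      using assms(6) x y t unfolding ivf_convex_on_def by auto
    define a where "a = fst (F (y + t *\<^sub>R d)) - fst (F y)"
    define b where "b = snd (F (y + t *\<^sub>R d)) - snd (F y)"
    define a' where "a' = fst (F (x + t *\<^sub>R (-d))) - fst (F x)"
    define b' where "b' = snd (F (x + t *\<^sub>R (-d))) - snd (F x)"
    have "a \<le> t * (fst (F x) - fst (F y))" "b \<le> t * (snd (F x) - snd (F y))"
      using c1 t unfolding a_def b_def p1 ile_def iadd_def iscale_def by (auto simp: algebra_simps)
    moreover have "a' \<le> t * (fst (F y) - fst (F x))" "b' \<le> t * (snd (F y) - snd (F x))"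
      using c2 t unfolding a'_def b'_def p2 ile_def iadd_def iscale_def by (auto simp: algebra_simps)
    ultimately have m1: "min a b \<le> - max a' b'" and m2: "max a b \<le> - min a' b'"
      by (auto simp: algebra_simps min_def max_def)
    have "min a b / t \<le> (- max a' b') / t" using divide_right_mono[OF m1, of t] t(1) by (simp only: less_imp_le)
    moreover have "max a b / t \<le> (- min a' b') / t" using divide_right_mono[OF m2, of t] t(1) by (simp only: less_imp_le)
    ultimately have "(1/t) * min a b \<le> - ((1/t) * max a' b')" "(1/t) * max a b \<le> - ((1/t) * min a' b')"
      by (simp_all only: divide_inverse_commute minus_divide_left[symmetric] divide_real_def mult_1_left)
    then show ?thesis using t
      unfolding Qx_def Qy_def a_def b_def a'_def b'_def by (simp add: iscale_def gH_diff_def)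
  qed
  have ev: "eventually (\<lambda>t. 0 < t \<and> t < (1::real)) (at_right 0)"
    by (simp add: eventually_at_right_less eventually_at_right_field) (intro exI[of _ 1], auto)
  have "fst Ly \<le> fst Lx"
    by (rule tendsto_le[OF _ fx fy]) (auto intro: eventually_mono[OF ev] dest: ineq)
  moreover have "snd Ly \<le> snd Lx"
    by (rule tendsto_le[OF _ sx sy]) (auto intro: eventually_mono[OF ev] dest: ineq)
  ultimately show "ile izero (gH_diff (dir_grad F (x - y) x) (dir_grad F (x - y) y))"
    unfolding d_def[symmetric] gx gy by (simp add: ile_def izero_def gH_diff_def)
qed

end
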